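(* Let $P$ be a program and let $\tau = \alpha \cdot \mathit{issue}(p,t) \cdot \beta \cdot \mathit{com}(p,t) \cdot \gamma$ be a minimal anomaly of $P$ such that $\mathit{issue}(p,t)$ happens before $\mathit{com}(p,t)$ through $\beta$. Then $\tau' = \alpha \cdot \mathit{issue}(p,t) \cdot \beta \cdot \mathit{com}(p,t)$ is also a minimal anomaly of $P$.
   Context: Programs: parallel compositions of processes, each a sequence of transactions (reads of shared variables into registers, writes of register expressions to shared variables, assume statements, delimited by begin and commit). Snapshot isolation (SI): a transaction reads/writes a local snapshot of the central memory taken at its begin and can commit (publishing its writes) only if no transaction committed after its begin wrote a variable it writes. Serializability: every transaction executes atomically. Traces: each transaction $t$ of process $p$ yields an issue event $\mathit{issue}(p,t)$ (begin, reads, local writes) and a commit event $\mathit{com}(p,t)$. Dependencies: $\mathsf{po}$ (program order), $\mathsf{rf}$ (write-read), $\mathsf{st}$ (store order between writes to the same variable), $\mathsf{cf}$ (conflict: a read does not see a write to the same variable that would affect it if visible), and issue-to-commit of the same transaction; $\mathsf{hb}^1$ is their union, $\mathsf{hb}$ its transitive closure. An anomaly of $P$ is a trace of an SI execution of $P$ that is not a trace of any serializable execution of $P$. "$a$ happens before $b$ through $\beta$" (in a trace $\alpha\cdot a\cdot\beta\cdot b\cdot\gamma$) means there is a nonempty subsequence $c_1\cdots c_n$ of $\beta$ with $c_i\to_{\mathsf{hb}^1}c_{i+1}$ for all $i\in[0,n]$, $c_0=a$, $c_{n+1}=b$. A transaction $t$ is delayed in a trace $\tau=\alpha\cdot\mathit{issue}(p,t)\cdot\beta\cdot\mathit{com}(p,t)\cdot\gamma$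 if $\mathit{issue}(p,t)$ happens before $\mathit{com}(p,t)$ through $\beta$. $\#(\tau)$ is the number of delayed transactions in $\tau$, and an anomaly is minimal if it has the least number of delayed transactions among all anomalies of $P$. *)

theory Defs
  imports Main
begin

text \<open>Shared variables 'v, registers 'r, values 'd. Register expressions and
assume conditions are given semantically as functions of the register valuation.\<close>

datatype ('v, 'r, 'd) instr =
    Read 'r 'v
  | Write 'v "('r \<Rightarrow> 'd) \<Rightarrow> 'd"
  | Assume "('r \<Rightarrow> 'd) \<Rightarrow> bool"

type_synonym ('v, 'r, 'd) txn = "('v, 'r, 'd) instr list"

text \<open>A program: a list of processes, each a list of transactions.
Process p is index p, transaction t of p is index t in its list.\<close>
type_synonym ('v, 'r, 'd) program = "('v, 'r, 'd) txn list list"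

abbreviation txn_of :: "('v, 'r, 'd) program \<Rightarrow> nat \<Rightarrow> nat \<Rightarrow> ('v, 'r, 'd) txn" where
  "txn_of P p t \<equiv> P ! p ! t"

datatype event = Issue nat nat | Com nat nat

fun exec_txn :: "('v \<Rightarrow> 'd) \<Rightarrow> ('v, 'r, 'd) txn \<Rightarrow> ('r \<Rightarrow> 'd) \<Rightarrow> ('v \<Rightarrow> 'd option)
                 \<Rightarrow> (('r \<Rightarrow> 'd) \<times> ('v \<Rightarrow> 'd option)) option" where
  "exec_txn m [] \<rho> w = Some (\<rho>, w)"
| "exec_txn m (Read r x # is) \<rho> w =
     exec_txn m is (\<rho>(r := (case w x of Some d \<Rightarrow> d | None \<Rightarrow> m x))) w"
| "exec_txn m (Write x f # is) \<rho> w = exec_txn m is \<rho> (w(x \<mapsto> f \<rho>))"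
| "exec_txn m (Assume g # is) \<rho> w = (if g \<rho> then exec_txn m is \<rho> w else None)"

text \<open>Variables read from the snapshot (i.e. not after a local write to them).\<close>
fun ext_reads_from :: "'v set \<Rightarrow> ('v, 'r, 'd) txn \<Rightarrow> 'v set" where
  "ext_reads_from W [] = {}"
| "ext_reads_from W (Read r x # is) = (if x \<in> W then {} else {x}) \<union> ext_reads_from W is"
| "ext_reads_from W (Write x f # is) = ext_reads_from (insert x W) is"
| "ext_reads_from W (Assume g # is) = ext_reads_from W is"

definition ext_reads :: "('v, 'r, 'd) txn \<Rightarrow> 'v set" where
  "ext_reads T = ext_reads_from {} T"

definition wset :: "('v, 'r, 'd) txn \<Rightarrow> 'v set" where
  "wset T = {x. \<exists>f. Write x f \<in> set T}"

record ('v, 'r, 'd) cfg =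
  mem  :: "'v \<Rightarrow> 'd"
  regs :: "nat \<Rightarrow> 'r \<Rightarrow> 'd"
  nxt  :: "nat \<Rightarrow> nat"
  pend :: "nat \<Rightarrow> ('v \<Rightarrow> 'd option) option"

definition init_cfg :: "('v, 'r, 'd::zero) cfg" where
  "init_cfg = \<lparr> mem = (\<lambda>_. 0), regs = (\<lambda>_ _. 0), nxt = (\<lambda>_. 0), pend = (\<lambda>_. None) \<rparr>"

definition no_conflict :: "('v, 'r, 'd) program \<Rightarrow> event list \<Rightarrow> nat \<Rightarrow> nat \<Rightarrow> bool" where
  "no_conflict P h p t \<longleftrightarrow>
     (\<forall>i k p' t'. i < k \<and> k < length h \<and> h ! i = Issue p t \<and> h ! k = Com p' t'
        \<longrightarrow> wset (txn_of P p' t') \<inter> wset (txn_of P p t) = {})"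

fun si_step :: "('v, 'r, 'd) program \<Rightarrow> event list \<Rightarrow> ('v, 'r, 'd) cfg \<Rightarrow> event
                \<Rightarrow> ('v, 'r, 'd) cfg option" where
  "si_step P h c (Issue p t) =
     (if p < length P \<and> t < length (P ! p) \<and> nxt c p = t \<and> pend c p = None then
        (case exec_txn (mem c) (txn_of P p t) (regs c p) Map.empty of
           None \<Rightarrow> None
         | Some (\<rho>, w) \<Rightarrow> Some (c\<lparr> regs := (regs c)(p := \<rho>), pend := (pend c)(p := Some w) \<rparr>))
      else None)"
| "si_step P h c (Com p t) =
     (case pend c p of
        None \<Rightarrow> None
      | Some w \<Rightarrow>
          (if nxt c p = t \<and> no_conflict P h p t then
             Some (c\<lparr> mem := (\<lambda>x. case w x of Some d \<Rightarrow> d | None \<Rightarrow> mem c x),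
                      pend := (pend c)(p := None), nxt := (nxt c)(p := Suc t) \<rparr>)
           else None))"

text \<open>Run over the reversed event list (head = last event).\<close>
fun run_rev :: "('v, 'r, 'd::zero) program \<Rightarrow> event list \<Rightarrow> ('v, 'r, 'd) cfg option" where
  "run_rev P [] = Some init_cfg"
| "run_rev P (e # r) =
     (case run_rev P r of None \<Rightarrow> None | Some c \<Rightarrow> si_step P (rev r) c e)"

definition si_exec :: "('v, 'r, 'd::zero) program \<Rightarrow> event list \<Rightarrow> bool" where
  "si_exec P \<tau> \<longleftrightarrow> run_rev P (rev \<tau>) \<noteq> None"

text \<open>Serializable execution: every (committed) transaction executes atomically,
i.e. its commit immediately follows its issue.\<close>
definition ser_exec :: "('v, 'r, 'd::zero) program \<Rightarrow> event list \<Rightarrow> bool" where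
  "ser_exec P \<sigma> \<longleftrightarrow> si_exec P \<sigma> \<and>
     (\<forall>k p t. k < length \<sigma> \<and> \<sigma> ! k = Com p t \<longrightarrow> 0 < k \<and> \<sigma> ! (k - 1) = Issue p t)"

definition at :: "event list \<Rightarrow> nat \<Rightarrow> event \<Rightarrow> bool" where
  "at \<tau> k e \<longleftrightarrow> k < length \<tau> \<and> \<tau> ! k = e"

definition po :: "('v, 'r, 'd) program \<Rightarrow> event list \<Rightarrow> event \<Rightarrow> event \<Rightarrow> bool" where
  "po P \<tau> e1 e2 \<longleftrightarrow> (\<exists>p t t'. e1 = Issue p t \<and> e2 = Issue p t' \<and> t < t'
                         \<and> e1 \<in> set \<tau> \<and> e2 \<in> set \<tau>)"

definition rf :: "('v, 'r, 'd) program \<Rightarrow> event list \<Rightarrow> event \<Rightarrow> event \<Rightarrow> bool" where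
  "rf P \<tau> e1 e2 \<longleftrightarrow> (\<exists>p' t' p t x k i. e1 = Com p' t' \<and> e2 = Issue p t \<and>
       at \<tau> k e1 \<and> at \<tau> i e2 \<and> k < i \<and>
       x \<in> ext_reads (txn_of P p t) \<and> x \<in> wset (txn_of P p' t') \<and>
       (\<forall>k' p'' t''. k < k' \<and> k' < i \<and> at \<tau> k' (Com p'' t'')
           \<longrightarrow> x \<notin> wset (txn_of P p'' t'')))"

definition st :: "('v, 'r, 'd) program \<Rightarrow> event list \<Rightarrow> event \<Rightarrow> event \<Rightarrow> bool" where
  "st P \<tau> e1 e2 \<longleftrightarrow> (\<exists>p t p' t' k k'. e1 = Com p t \<and> e2 = Com p' t' \<and>
       at \<tau> k e1 \<and> at \<tau> k' e2 \<and> k < k' \<and>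
       wset (txn_of P p t) \<inter> wset (txn_of P p' t') \<noteq> {})"

text \<open>conflict: (p,t) reads x from its snapshot and another transaction (p',t')
writing x commits after the issue of (p,t), so its write is not visible to the read.\<close>
definition cf :: "('v, 'r, 'd) program \<Rightarrow> event list \<Rightarrow> event \<Rightarrow> event \<Rightarrow> bool" where
  "cf P \<tau> e1 e2 \<longleftrightarrow> (\<exists>p t p' t' i k. e1 = Issue p t \<and> e2 = Com p' t' \<and> (p, t) \<noteq> (p', t') \<and>
       at \<tau> i e1 \<and> at \<tau> k e2 \<and> i < k \<and>
       ext_reads (txn_of P p t) \<inter> wset (txn_of P p' t') \<noteq> {})"

definition it :: "event list \<Rightarrow> event \<Rightarrow> event \<Rightarrow> bool" where
  "it \<tau> e1 e2 \<longleftrightarrow> (\<exists>p t. e1 = Issue p t \<and> e2 = Com p t \<and> e1 \<in> set \<tau> \<and> e2 \<in> set \<tau>)"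

definition hb1 :: "('v, 'r, 'd) program \<Rightarrow> event list \<Rightarrow> event \<Rightarrow> event \<Rightarrow> bool" where
  "hb1 P \<tau> e1 e2 \<longleftrightarrow> po P \<tau> e1 e2 \<or> rf P \<tau> e1 e2 \<or> st P \<tau> e1 e2 \<or> cf P \<tau> e1 e2 \<or> it \<tau> e1 e2"

definition trace_of :: "('v, 'r, 'd) program \<Rightarrow> event list
    \<Rightarrow> event set \<times> (event \<times> event) set \<times> (event \<times> event) set \<times> (event \<times> event) set \<times> (event \<times> event) set" where
  "trace_of P \<tau> = (set \<tau>, {(a, b). po P \<tau> a b}, {(a, b). rf P \<tau> a b},
                    {(a, b). st P \<tau> a b}, {(a, b). cf P \<tau> a b})"

definition anomaly :: "('v, 'r, 'd::zero) program \<Rightarrow> event list \<Rightarrow> bool" where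
  "anomaly P \<tau> \<longleftrightarrow> si_exec P \<tau> \<and> \<not> (\<exists>\<sigma>. ser_exec P \<sigma> \<and> trace_of P \<sigma> = trace_of P \<tau>)"

definition hb_through :: "('v, 'r, 'd) program \<Rightarrow> event list \<Rightarrow> nat \<Rightarrow> nat \<Rightarrow> bool" where
  "hb_through P \<tau> i j \<longleftrightarrow> j < length \<tau> \<and> (\<exists>ks. ks \<noteq> [] \<and> sorted_wrt (<) ks \<and>
     (\<forall>k \<in> set ks. i < k \<and> k < j) \<and>
     (let cs = i # ks @ [j] in
        \<forall>m. Suc m < length cs \<longrightarrow> hb1 P \<tau> (\<tau> ! (cs ! m)) (\<tau> ! (cs ! Suc m))))"

definition delayed :: "('v, 'r, 'd) program \<Rightarrow> event list \<Rightarrow> nat \<Rightarrow> nat \<Rightarrow> bool" where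
  "delayed P \<tau> p t \<longleftrightarrow> (\<exists>\<alpha> \<beta> \<gamma>. \<tau> = \<alpha> @ [Issue p t] @ \<beta> @ [Com p t] @ \<gamma> \<and>
       hb_through P \<tau> (length \<alpha>) (Suc (length \<alpha> + length \<beta>)))"

definition num_delayed :: "('v, 'r, 'd) program \<Rightarrow> event list \<Rightarrow> nat" where
  "num_delayed P \<tau> = card {(p, t). delayed P \<tau> p t}"

definition minimal_anomaly :: "('v, 'r, 'd::zero) program \<Rightarrow> event list \<Rightarrow> bool" where
  "minimal_anomaly P \<tau> \<longleftrightarrow> anomaly P \<tau> \<and> (\<forall>\<sigma>. anomaly P \<sigma> \<longrightarrow> num_delayed P \<tau> \<le> num_delayed P \<sigma>)"

end

theory Submission
  imports Defs
begin

definition sinv :: "event list \<Rightarrow> ('v, 'r, 'd) cfg \<Rightarrow> bool" where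
  "sinv h c \<longleftrightarrow>
     (\<forall>q s. Issue q s \<in> set h \<longleftrightarrow> s < nxt c q \<or> (s = nxt c q \<and> pend c q \<noteq> None)) \<and>
     (\<forall>q s. Com q s \<in> set h \<longleftrightarrow> s < nxt c q) \<and> distinct h \<and>
     (\<forall>i j q s s'. i < j \<and> j < length h \<and> h ! i = Issue q s \<and> h ! j = Issue q s' \<longrightarrow> s < s') \<and>
     (\<forall>i j q s. i < j \<and> j < length h \<and> h ! i = Com q s \<longrightarrow> h ! j \<noteq> Issue q s)"

lemma sinv_init: "sinv [] init_cfg"
  by (simp add: sinv_def init_cfg_def)

lemma nth_snoc_cases:
  assumes "i < j" "j < length (h @ [e])"
  shows "(j < length h \<and> (h @ [e]) ! i = h ! i \<and> (h @ [e]) ! j = h ! j) \<or>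
         (j = length h \<and> i < length h \<and> (h @ [e]) ! i = h ! i \<and> (h @ [e]) ! j = e)"
  using assms by (auto simp: nth_append)

lemma sinv_step:
  assumes inv: "sinv h c0" and st: "si_step P h c0 e = Some c"
  shows "sinv (h @ [e]) c"
proof -
  have J1: "\<forall>q s. Issue q s \<in> set h \<longleftrightarrow> s < nxt c0 q \<or> (s = nxt c0 q \<and> pend c0 q \<noteq> None)"
    using inv unfolding sinv_def by (elim conjE) assumption
  have J2: "\<forall>q s. Com q s \<in> set h \<longleftrightarrow> s < nxt c0 q"
    using inv unfolding sinv_def by (elim conjE) assumption
  have I3: "distinct h"
    using inv unfolding sinv_def by (elim conjE) assumption
  have J4: "\<forall>i j q s s'. i < j \<and> j < length h \<and> h ! i = Issue q s \<and> h ! j = Issue q s' \<longrightarrow> s < s'"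
    using inv unfolding sinv_def by (elim conjE) assumption
  have J5: "\<forall>i j q s. i < j \<and> j < length h \<and> h ! i = Com q s \<longrightarrow> h ! j \<noteq> Issue q s"
    using inv unfolding sinv_def by (elim conjE) assumption
  note I1 = J1[rule_format] and I2 = J2[rule_format]
  have I4: "\<And>i j q s s'. i < j \<Longrightarrow> j < length h \<Longrightarrow> h ! i = Issue q s \<Longrightarrow> h ! j = Issue q s' \<Longrightarrow> s < s'"
    using J4 by blast
  have I5: "\<And>i j q s. i < j \<Longrightarrow> j < length h \<Longrightarrow> h ! i = Com q s \<Longrightarrow> h ! j \<noteq> Issue q s"
    using J5 by blast
  show ?thesis
  proof (cases e)
  case (Issue q s)
  from st Issue obtain \<rho> w where
    c: "c = c0\<lparr> regs := (regs c0)(q := \<rho>), pend := (pend c0)(q := Some w) \<rparr>"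
    and nx: "nxt c0 q = s" and pn: "pend c0 q = None"
    by (auto split: if_splits option.splits)
  have nc: "nxt c = nxt c0" and pc: "pend c = (pend c0)(q := Some w)" by (simp_all add: c)
  have notin: "Issue q s \<notin> set h" using I1[of q s] nx pn by simp
  have A: "\<forall>q' s'. Issue q' s' \<in> set (h @ [e]) \<longleftrightarrow> s' < nxt c q' \<or> (s' = nxt c q' \<and> pend c q' \<noteq> None)"
  proof (intro allI)
    fix q' s'
    show "Issue q' s' \<in> set (h @ [e]) \<longleftrightarrow> s' < nxt c q' \<or> (s' = nxt c q' \<and> pend c q' \<noteq> None)"
    proof (cases "q' = q")
      case True then show ?thesis using I1[of q s'] nx pn unfolding nc pc Issue by auto
    next
      case False then show ?thesis using I1[of q' s'] unfolding nc pc Issue by simp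
    qed
  qed
  have B: "\<forall>q' s'. Com q' s' \<in> set (h @ [e]) \<longleftrightarrow> s' < nxt c q'"
    using I2 unfolding nc Issue by simp
  have D: "\<forall>i j q' s1 s2. i < j \<and> j < length (h@[e]) \<and> (h@[e]) ! i = Issue q' s1 \<and> (h@[e]) ! j = Issue q' s2 \<longrightarrow> s1 < s2"
  proof (intro allI impI)
    fix i j q' s1 s2 assume H: "i < j \<and> j < length (h@[e]) \<and> (h@[e]) ! i = Issue q' s1 \<and> (h@[e]) ! j = Issue q' s2"
    from nth_snoc_cases[of i j h e, OF conjunct1[OF H] conjunct1[OF conjunct2[OF H]]] show "s1 < s2"
    proof
      assume "j < length h \<and> (h @ [e]) ! i = h ! i \<and> (h @ [e]) ! j = h ! j"
      then show ?thesis using H I4 by metis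
    next
      assume K: "j = length h \<and> i < length h \<and> (h @ [e]) ! i = h ! i \<and> (h @ [e]) ! j = e"
      then have "Issue q' s1 \<in> set h" using H by (metis nth_mem)
      moreover have "q' = q" "s2 = s" using K H Issue by auto
      ultimately show ?thesis using I1[of q s1] nx pn by simp
    qed
  qed
  have E: "\<forall>i j q' s'. i < j \<and> j < length (h@[e]) \<and> (h@[e]) ! i = Com q' s' \<longrightarrow> (h@[e]) ! j \<noteq> Issue q' s'"
  proof (intro allI impI)
    fix i j q' s' assume H: "i < j \<and> j < length (h@[e]) \<and> (h@[e]) ! i = Com q' s'"
    from nth_snoc_cases[of i j h e, OF conjunct1[OF H] conjunct1[OF conjunct2[OF H]]] show "(h@[e]) ! j \<noteq> Issue q' s'"
    proof
      assume "j < length h \<and> (h @ [e]) ! i = h ! i \<and> (h @ [e]) ! j = h ! j"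
      then show ?thesis using H I5 by metis
    next
      assume K: "j = length h \<and> i < length h \<and> (h @ [e]) ! i = h ! i \<and> (h @ [e]) ! j = e"
      then have "Com q' s' \<in> set h" using H by (metis nth_mem)
      then have "s' < nxt c0 q'" using I2 by blast
      then show ?thesis using K Issue nx by auto
    qed
  qed
  have dd: "distinct (h @ [e])" using I3 notin Issue by simp
  show ?thesis using A B D E dd unfolding sinv_def by blast
next
  case (Com q s)
  from st Com obtain w where
    c: "c = c0\<lparr> mem := (\<lambda>x. case w x of Some d \<Rightarrow> d | None \<Rightarrow> mem c0 x),
                      pend := (pend c0)(q := None), nxt := (nxt c0)(q := Suc s) \<rparr>"
    and nx: "nxt c0 q = s" and pn: "pend c0 q = Some w"
    by (auto split: if_splits option.splits)
  have nc: "nxt c = (nxt c0)(q := Suc s)" and pc: "pend c = (pend c0)(q := None)" by (simp_all add: c)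
  have notin: "Com q s \<notin> set h" using I2[of q s] nx by simp
  have A: "\<forall>q' s'. Issue q' s' \<in> set (h @ [e]) \<longleftrightarrow> s' < nxt c q' \<or> (s' = nxt c q' \<and> pend c q' \<noteq> None)"
  proof (intro allI)
    fix q' s'
    show "Issue q' s' \<in> set (h @ [e]) \<longleftrightarrow> s' < nxt c q' \<or> (s' = nxt c q' \<and> pend c q' \<noteq> None)"
    proof (cases "q' = q")
      case True then show ?thesis using I1[of q s'] nx pn unfolding nc pc Com by auto
    next
      case False then show ?thesis using I1[of q' s'] unfolding nc pc Com by simp
    qed
  qed
  have B: "\<forall>q' s'. Com q' s' \<in> set (h @ [e]) \<longleftrightarrow> s' < nxt c q'"
  proof (intro allI)
    fix q' s'
    show "Com q' s' \<in> set (h @ [e]) \<longleftrightarrow> s' < nxt c q'"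
    proof (cases "q' = q")
      case True then show ?thesis using I2[of q s'] nx unfolding nc Com by auto
    next
      case False then show ?thesis using I2[of q' s'] unfolding nc Com by simp
    qed
  qed
  have D: "\<forall>i j q' s1 s2. i < j \<and> j < length (h@[e]) \<and> (h@[e]) ! i = Issue q' s1 \<and> (h@[e]) ! j = Issue q' s2 \<longrightarrow> s1 < s2"
  proof (intro allI impI)
    fix i j q' s1 s2 assume H: "i < j \<and> j < length (h@[e]) \<and> (h@[e]) ! i = Issue q' s1 \<and> (h@[e]) ! j = Issue q' s2"
    from nth_snoc_cases[of i j h e, OF conjunct1[OF H] conjunct1[OF conjunct2[OF H]]] show "s1 < s2"
    proof
      assume "j < length h \<and> (h @ [e]) ! i = h ! i \<and> (h @ [e]) ! j = h ! j"
      then show ?thesis using H I4 by metis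
    next
      assume K: "j = length h \<and> i < length h \<and> (h @ [e]) ! i = h ! i \<and> (h @ [e]) ! j = e"
      then show ?thesis using H Com by auto
    qed
  qed
  have E: "\<forall>i j q' s'. i < j \<and> j < length (h@[e]) \<and> (h@[e]) ! i = Com q' s' \<longrightarrow> (h@[e]) ! j \<noteq> Issue q' s'"
  proof (intro allI impI)
    fix i j q' s' assume H: "i < j \<and> j < length (h@[e]) \<and> (h@[e]) ! i = Com q' s'"
    from nth_snoc_cases[of i j h e, OF conjunct1[OF H] conjunct1[OF conjunct2[OF H]]] show "(h@[e]) ! j \<noteq> Issue q' s'"
    proof
      assume "j < length h \<and> (h @ [e]) ! i = h ! i \<and> (h @ [e]) ! j = h ! j"
      then show ?thesis using H I5 by metis
    next
      assume K: "j = length h \<and> i < length h \<and> (h @ [e]) ! i = h ! i \<and> (h @ [e]) ! j = e"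
      then show ?thesis using Com by auto
    qed
  qed
  have dd: "distinct (h @ [e])" using I3 notin Com by simp
  show ?thesis using A B D E dd unfolding sinv_def by blast
  qed
qed

lemma sinv_run: "run_rev P (rev h) = Some c \<Longrightarrow> sinv h c"
proof (induction h arbitrary: c rule: rev_induct)
  case Nil
  then show ?case by (simp add: sinv_init)
next
  case (snoc e h)
  from snoc.prems obtain c0 where r: "run_rev P (rev h) = Some c0" and s: "si_step P h c0 e = Some c"
    by (auto split: option.splits)
  show ?case using sinv_step[OF snoc.IH[OF r] s] .
qed

lemma si_exec_sinv: "si_exec (P::('v, 'r, 'd::zero) program) h \<Longrightarrow> \<exists>c::('v, 'r, 'd) cfg. sinv h c"
  unfolding si_exec_def using sinv_run by blast

lemma si_props:
  assumes "si_exec (P::('v, 'r, 'd::zero) program) h"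
  shows "distinct h"
    and "\<And>a b q s s'. at h a (Issue q s) \<Longrightarrow> at h b (Issue q s') \<Longrightarrow> s < s' \<Longrightarrow> a < b"
    and "\<And>a b q s. at h a (Issue q s) \<Longrightarrow> at h b (Com q s) \<Longrightarrow> a < b"
proof -
  obtain c :: "('v, 'r, 'd) cfg" where I: "sinv h c" using si_exec_sinv[OF assms] by blast
  show "distinct h" using I by (simp add: sinv_def)
  show "a < b" if "at h a (Issue q s)" "at h b (Issue q s')" "s < s'" for a b q s s'
  proof (rule ccontr)
    assume "\<not> a < b"
    moreover have "a \<noteq> b" using that by (auto simp: at_def)
    ultimately have "b < a" by simp
    then have "s' < s" using I that unfolding sinv_def at_def by blast
    then show False using that by simp
  qed
  show "a < b" if "at h a (Issue q s)" "at h b (Com q s)" for a b q s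
  proof (rule ccontr)
    assume "\<not> a < b"
    moreover have "a \<noteq> b" using that by (auto simp: at_def)
    ultimately have "b < a" by simp
    then show False using I that unfolding sinv_def at_def by blast
  qed
qed

lemma run_rev_app: "run_rev P (xs @ ys) \<noteq> None \<Longrightarrow> run_rev P ys \<noteq> None"
  by (induction xs) (auto split: option.splits)

lemma si_exec_prefix: "si_exec P (xs @ ys) \<Longrightarrow> si_exec P xs"
  unfolding si_exec_def using run_rev_app[of P "rev ys" "rev xs"] by simp

lemma at_prefix: "at xs k e \<Longrightarrow> at (xs @ ys) k e"
  by (auto simp: at_def nth_append)

lemma at_prefix_back: "at (xs @ ys) k e \<Longrightarrow> k < length xs \<Longrightarrow> at xs k e"
  by (auto simp: at_def nth_append)

lemma hb1_mono: assumes h: "hb1 P xs e1 e2" shows "hb1 P (xs @ ys) e1 e2"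
proof -
 from h have "po P xs e1 e2 \<or> rf P xs e1 e2 \<or> st P xs e1 e2 \<or> cf P xs e1 e2 \<or> it xs e1 e2" unfolding hb1_def .
 then show ?thesis
 proof (elim disjE)
  assume "po P xs e1 e2" then show ?thesis unfolding po_def hb1_def by auto
next
  assume "rf P xs e1 e2"
  then obtain p' t' p t x k i where R: "e1 = Com p' t'" "e2 = Issue p t"
       "at xs k e1" "at xs i e2" "k < i"
       "x \<in> ext_reads (txn_of P p t)" "x \<in> wset (txn_of P p' t')"
       "\<forall>k' p'' t''. k < k' \<and> k' < i \<and> at xs k' (Com p'' t'')
           \<longrightarrow> x \<notin> wset (txn_of P p'' t'')"
    unfolding rf_def by blast
  have "\<forall>k' p'' t''. k < k' \<and> k' < i \<and> at (xs @ ys) k' (Com p'' t'')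
           \<longrightarrow> x \<notin> wset (txn_of P p'' t'')"
    using R(4,8) at_prefix_back by (metis at_def order.strict_trans)
  then have "rf P (xs @ ys) e1 e2" unfolding rf_def using R at_prefix by blast
  then show ?thesis by (simp add: hb1_def)
next
  assume "st P xs e1 e2" then show ?thesis unfolding st_def hb1_def using at_prefix by blast
next
  assume "cf P xs e1 e2" then show ?thesis unfolding cf_def hb1_def using at_prefix by blast
next
  assume "it xs e1 e2" then show ?thesis unfolding it_def hb1_def by auto
qed
qed

lemma at_restrict:
  assumes "distinct (xs @ ys)" "e \<in> set xs" "at (xs @ ys) k e"
  shows "at xs k e"
proof -
  obtain k' where k': "k' < length xs" "xs ! k' = e" using assms(2) by (meson in_set_conv_nth)
  have "(xs @ ys) ! k' = e" "k' < length (xs @ ys)" using k' by (auto simp: nth_append)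
  then have "k = k'" using assms(1,3) unfolding at_def by (metis nth_eq_iff_index_eq)
  then show ?thesis using k' by (simp add: at_def)
qed

lemma hb1_restrict:
  assumes d: "distinct (xs @ ys)" and e1: "e1 \<in> set xs" and e2: "e2 \<in> set xs"
    and h: "hb1 P (xs @ ys) e1 e2"
  shows "hb1 P xs e1 e2"
proof -
 from h have "po P (xs @ ys) e1 e2 \<or> rf P (xs @ ys) e1 e2 \<or> st P (xs @ ys) e1 e2 \<or> cf P (xs @ ys) e1 e2 \<or> it (xs @ ys) e1 e2" unfolding hb1_def .
 then show ?thesis
 proof (elim disjE)
  assume "po P (xs @ ys) e1 e2" then show ?thesis using e1 e2 unfolding po_def hb1_def by blast
next
  assume "rf P (xs @ ys) e1 e2"
  then obtain p' t' p t x k i where R: "e1 = Com p' t'" "e2 = Issue p t"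
       "at (xs @ ys) k e1" "at (xs @ ys) i e2" "k < i"
       "x \<in> ext_reads (txn_of P p t)" "x \<in> wset (txn_of P p' t')"
       "\<forall>k' p'' t''. k < k' \<and> k' < i \<and> at (xs @ ys) k' (Com p'' t'')
           \<longrightarrow> x \<notin> wset (txn_of P p'' t'')"
    unfolding rf_def by blast
  have a1: "at xs k e1" using at_restrict[OF d e1 R(3)] .
  have a2: "at xs i e2" using at_restrict[OF d e2 R(4)] .
  have "\<forall>k' p'' t''. k < k' \<and> k' < i \<and> at xs k' (Com p'' t'')
           \<longrightarrow> x \<notin> wset (txn_of P p'' t'')" using R(8) at_prefix by blast
  then have "rf P xs e1 e2" unfolding rf_def using R a1 a2 by blast
  then show ?thesis by (simp add: hb1_def)
next
  assume "st P (xs @ ys) e1 e2" then show ?thesis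
    unfolding st_def hb1_def using at_restrict[OF d e1] at_restrict[OF d e2] by blast
next
  assume "cf P (xs @ ys) e1 e2" then show ?thesis
    unfolding cf_def hb1_def using at_restrict[OF d e1] at_restrict[OF d e2] by blast
next
  assume "it (xs @ ys) e1 e2" then show ?thesis using e1 e2 unfolding it_def hb1_def by blast
qed
qed

lemma hb1_ser:
  assumes si: "si_exec (P::('v, 'r, 'd::zero) program) h" and hb: "hb1 P h e1 e2"
  shows "\<exists>a b. a < b \<and> at h a e1 \<and> at h b e2"
proof -
 from hb have "po P h e1 e2 \<or> rf P h e1 e2 \<or> st P h e1 e2 \<or> cf P h e1 e2 \<or> it h e1 e2" unfolding hb1_def .
 then show ?thesis
 proof (elim disjE)
  assume "po P h e1 e2"
  then obtain q s s' where H: "e1 = Issue q s" "e2 = Issue q s'" "s < s'" "e1 \<in> set h" "e2 \<in> set h"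
    unfolding po_def by blast
  obtain a where a: "at h a e1" using H(4) by (metis at_def in_set_conv_nth)
  obtain b where b: "at h b e2" using H(5) by (metis at_def in_set_conv_nth)
  have "a < b" using si_props(2)[OF si, of a q s b s'] a b H by simp
  then show ?thesis using a b by blast
next
  assume "it h e1 e2"
  then obtain q s where H: "e1 = Issue q s" "e2 = Com q s" "e1 \<in> set h" "e2 \<in> set h"
    unfolding it_def by blast
  obtain a where a: "at h a e1" using H(3) by (metis at_def in_set_conv_nth)
  obtain b where b: "at h b e2" using H(4) by (metis at_def in_set_conv_nth)
  have "a < b" using si_props(3)[OF si, of a q s b] a b H by simp
  then show ?thesis using a b by blast
qed (auto simp: rf_def st_def cf_def)
qed

lemma hb1_trace:
  assumes "trace_of P \<sigma> = trace_of P \<tau>" "hb1 P \<tau> e1 e2"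
  shows "hb1 P \<sigma> e1 e2"
proof -
  have s: "set \<sigma> = set \<tau>" and po: "{(a, b). po P \<sigma> a b} = {(a, b). po P \<tau> a b}"
    and rf: "{(a, b). rf P \<sigma> a b} = {(a, b). rf P \<tau> a b}"
    and st: "{(a, b). st P \<sigma> a b} = {(a, b). st P \<tau> a b}"
    and cf: "{(a, b). cf P \<sigma> a b} = {(a, b). cf P \<tau> a b}"
    using assms(1) unfolding trace_of_def by auto
  have "po P \<sigma> e1 e2 = po P \<tau> e1 e2" using po by (metis (mono_tags) case_prodI mem_Collect_eq old.prod.case)
  moreover have "rf P \<sigma> e1 e2 = rf P \<tau> e1 e2" using rf by (metis (mono_tags) case_prodI mem_Collect_eq old.prod.case)
  moreover have "st P \<sigma> e1 e2 = st P \<tau> e1 e2" using st by (metis (mono_tags) case_prodI mem_Collect_eq old.prod.case)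
  moreover have "cf P \<sigma> e1 e2 = cf P \<tau> e1 e2" using cf by (metis (mono_tags) case_prodI mem_Collect_eq old.prod.case)
  moreover have "it \<sigma> e1 e2 = it \<tau> e1 e2" using s by (simp add: it_def)
  ultimately show ?thesis using assms(2) unfolding hb1_def by simp
qed

lemma cs_bound:
  fixes i j :: nat
  assumes "\<forall>k \<in> set ks. i < k \<and> k < j" "i < j" "m < length (i # ks @ [j])"
  shows "(i # ks @ [j]) ! m \<le> j"
proof -
  have "(i # ks @ [j]) ! m \<in> set (i # ks @ [j])" using assms(3) by (rule nth_mem)
  moreover have "\<forall>x \<in> set (i # ks @ [j]). x \<le> j" using assms(1,2) by auto
  ultimately show ?thesis by blast
qed

lemma delayed_mono:
  assumes "delayed P xs q s" shows "delayed P (xs @ ys) q s"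
proof -
  obtain a b g where xs: "xs = a @ [Issue q s] @ b @ [Com q s] @ g"
    and hb: "hb_through P xs (length a) (Suc (length a + length b))"
    using assms unfolding delayed_def by blast
  let ?i = "length a" and ?j = "Suc (length a + length b)"
  obtain ks where K: "ks \<noteq> []" "sorted_wrt (<) ks" "\<forall>k \<in> set ks. ?i < k \<and> k < ?j"
    "\<forall>m. Suc m < length (?i # ks @ [?j]) \<longrightarrow>
        hb1 P xs (xs ! ((?i # ks @ [?j]) ! m)) (xs ! ((?i # ks @ [?j]) ! Suc m))"
    using hb unfolding hb_through_def Let_def by blast
  have jl: "?j < length xs" using xs by simp
  have nth: "(xs @ ys) ! ((?i # ks @ [?j]) ! m) = xs ! ((?i # ks @ [?j]) ! m)"
    if "m < length (?i # ks @ [?j])" for m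
    using cs_bound[OF K(3) _ that] jl by (simp add: nth_append)
  have "\<forall>m. Suc m < length (?i # ks @ [?j]) \<longrightarrow>
        hb1 P (xs @ ys) ((xs @ ys) ! ((?i # ks @ [?j]) ! m)) ((xs @ ys) ! ((?i # ks @ [?j]) ! Suc m))"
  proof (intro allI impI)
    fix m assume m: "Suc m < length (?i # ks @ [?j])"
    show "hb1 P (xs @ ys) ((xs @ ys) ! ((?i # ks @ [?j]) ! m)) ((xs @ ys) ! ((?i # ks @ [?j]) ! Suc m))"
      using hb1_mono[OF K(4)[rule_format, OF m]] nth[of m] nth[of "Suc m"] m by simp
  qed
  then have "hb_through P (xs @ ys) ?i ?j"
    unfolding hb_through_def Let_def using K jl by auto
  moreover have "xs @ ys = a @ [Issue q s] @ b @ [Com q s] @ (g @ ys)" using xs by simp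
  ultimately show ?thesis unfolding delayed_def by blast
qed

lemma num_delayed_mono: "num_delayed P xs \<le> num_delayed P (xs @ ys)"
proof -
  let ?f = "\<lambda>e. case e of Issue q s \<Rightarrow> (q, s) | Com q s \<Rightarrow> (q, s)"
  have "{(q, s). delayed P (xs @ ys) q s} \<subseteq> ?f ` set (xs @ ys)"
  proof
    fix x assume "x \<in> {(q, s). delayed P (xs @ ys) q s}"
    then obtain q s where x: "x = (q, s)" "delayed P (xs @ ys) q s" by blast
    then have "Issue q s \<in> set (xs @ ys)" unfolding delayed_def by force
    then show "x \<in> ?f ` set (xs @ ys)" using x by force
  qed
  then have fin: "finite {(q, s). delayed P (xs @ ys) q s}" by (rule finite_subset) simp
  have "{(q, s). delayed P xs q s} \<subseteq> {(q, s). delayed P (xs @ ys) q s}"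
    using delayed_mono by blast
  then show ?thesis unfolding num_delayed_def using fin by (rule card_mono[rotated])
qed

theorem lemma2:
  fixes P :: "('v, 'r, 'd::zero) program"
    and \<alpha> \<beta> \<gamma> :: "event list" and p t :: nat
  assumes "minimal_anomaly P \<tau>"
    and "\<tau> = \<alpha> @ [Issue p t] @ \<beta> @ [Com p t] @ \<gamma>"
    and "hb_through P \<tau> (length \<alpha>) (Suc (length \<alpha> + length \<beta>))"
  shows "minimal_anomaly P (\<alpha> @ [Issue p t] @ \<beta> @ [Com p t])"
proof -
  define \<tau>' where "\<tau>' = \<alpha> @ [Issue p t] @ \<beta> @ [Com p t]"
  have tt: "\<tau> = \<tau>' @ \<gamma>" using assms(2) by (simp add: \<tau>'_def)
  have an: "anomaly P \<tau>" using assms(1) unfolding minimal_anomaly_def by blast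
  have si: "si_exec P \<tau>" using an unfolding anomaly_def by blast
  have si': "si_exec P \<tau>'" using si tt si_exec_prefix by blast
  have dist: "distinct (\<tau>' @ \<gamma>)" using si_props(1)[OF si] tt by simp
  let ?i = "length \<alpha>" and ?j = "Suc (length \<alpha> + length \<beta>)"
  obtain ks where K: "ks \<noteq> []" "sorted_wrt (<) ks" "\<forall>k \<in> set ks. ?i < k \<and> k < ?j"
    "\<forall>m. Suc m < length (?i # ks @ [?j]) \<longrightarrow>
        hb1 P \<tau> (\<tau> ! ((?i # ks @ [?j]) ! m)) (\<tau> ! ((?i # ks @ [?j]) ! Suc m))"
    using assms(3) unfolding hb_through_def Let_def by blast
  define cs where "cs = ?i # ks @ [?j]"
  define E where "E m = \<tau> ! (cs ! m)" for m
  have jl: "?j < length \<tau>'" by (simp add: \<tau>'_def)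
  have Ein: "E m \<in> set \<tau>'" if "m < length cs" for m
  proof -
    have "cs ! m \<le> ?j" using cs_bound[OF K(3) _ that[unfolded cs_def]] cs_def by simp
    then have "cs ! m < length \<tau>'" using jl by simp
    then show ?thesis unfolding E_def tt by (simp add: nth_append)
  qed
  have E0: "E 0 = Issue p t" unfolding E_def cs_def assms(2) by (simp add: nth_append)
  have lcs: "length cs = length ks + 2" unfolding cs_def by simp
  have Elast: "E (length ks + 1) = Com p t" unfolding E_def cs_def assms(2)
    by (simp add: nth_append)
  have hbE: "hb1 P \<tau>' (E m) (E (Suc m))" if "Suc m < length cs" for m
  proof -
    have h: "hb1 P (\<tau>' @ \<gamma>) (E m) (E (Suc m))" using K(4) that unfolding E_def cs_def tt[symmetric] by blast
    show ?thesis using hb1_restrict[OF dist Ein[of m] Ein[of "Suc m"] h] that by simp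
  qed
  have notser: False if ser: "ser_exec P \<sigma>" and tr: "trace_of P \<sigma> = trace_of P \<tau>'" for \<sigma>
  proof -
    have sis: "si_exec P \<sigma>" using ser unfolding ser_exec_def by blast
    have ds: "distinct \<sigma>" using si_props(1)[OF sis] .
    have setq: "set \<sigma> = set \<tau>'" using tr unfolding trace_of_def by simp
    have "Issue p t \<in> set \<sigma>" using setq by (simp add: \<tau>'_def)
    then obtain a0 where a0: "at \<sigma> a0 (Issue p t)" by (metis at_def in_set_conv_nth)
    have uniq: "a = b" if "at \<sigma> a e" "at \<sigma> b e" for a b e
      using that ds unfolding at_def by (metis nth_eq_iff_index_eq)
    have claim: "\<exists>a. at \<sigma> a (E m) \<and> a0 + m \<le> a" if "m < length cs" for m
      using that
    proof (induction m)
      case 0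
      then show ?case using a0 E0 by auto
    next
      case (Suc m)
      then obtain a where a: "at \<sigma> a (E m)" "a0 + m \<le> a" by auto
      have "hb1 P \<sigma> (E m) (E (Suc m))" using hb1_trace[OF tr hbE[OF Suc.prems]] .
      then obtain a' b' where "a' < b'" "at \<sigma> a' (E m)" "at \<sigma> b' (E (Suc m))"
        using hb1_ser[OF sis] by blast
      moreover have "a' = a" using uniq a(1) \<open>at \<sigma> a' (E m)\<close> by blast
      ultimately show ?case using a(2) by (intro exI[of _ b']) auto
    qed
    obtain b where b: "at \<sigma> b (Com p t)" "a0 + (length ks + 1) \<le> b"
      using claim[of "length ks + 1"] lcs Elast by auto
    have "0 < b \<and> \<sigma> ! (b - 1) = Issue p t" using ser b(1) unfolding ser_exec_def at_def by blast
    then have "at \<sigma> (b - 1) (Issue p t)" using b(1) unfolding at_def by auto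
    then have "b - 1 = a0" using uniq a0 by blast
    then show False using b(2) K(1) by (cases ks) auto
  qed
  have an': "anomaly P \<tau>'" unfolding anomaly_def using si' notser by blast
  have "num_delayed P \<tau>' \<le> num_delayed P \<sigma>" if "anomaly P \<sigma>" for \<sigma>
  proof -
    have "num_delayed P \<tau> \<le> num_delayed P \<sigma>" using assms(1) that unfolding minimal_anomaly_def by blast
    moreover have "num_delayed P \<tau>' \<le> num_delayed P \<tau>" using num_delayed_mono tt by simp
    ultimately show ?thesis by simp
  qed
  then show ?thesis using an' unfolding minimal_anomaly_def \<tau>'_def by blast
qed

end
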